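(* The reward-design problem (maximize $\sum_{i=1}^n x_i^*$ over feasible $(f,x_1^*,\dots,x_n^* )$) has the same optimal value as the linear program \[\begin{aligned}\text{maximize}\ & \sum_{i=1}^n x_i^*\\ \text{subject to}\ & 0\le x_i^*\le q_i,\quad i=1,\dots,n,\\ & 0\le x_1^*\le x_2^*\le\cdots\le x_n^*,\\ & C\left(\frac{x_n^*}{q_n}+\sum_{i=1}^{n-1}\left((n-i)\left(\frac{1}{q_i}-\frac{1}{q_{i+1}}\right)+\frac{1}{q_i}\right)x_i^*\right)\le B.\end{aligned}\] Moreover, if $(x_1^*,\dots,x_n^* )$ is an optimal solution of this linear program, then $(f,x_1^*,\dots,x_n^* )$ is an optimal solution of the reward-design problem, where $f(x)=0$ for $0\le x<x_1^*$ and, for $x_j^*\le x<x_{j+1}^*$ ($1\le j\le n$, $x_{n+1}^*=+\infty$), $f(x)=C\left(\sum_{t=1}^{j-1}\left(\frac{x_t^*}{q_t}-\frac{x_t^*}{q_{t+1}}\right)+\frac{x_j^*}{q_j}\right)$.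
   Context: There are $n$ agents with types $0<q_1\le q_2\le\cdots\le q_n$, a cost constant $C>0$ and a budget $B>0$. A reward function is a map $f:[0,\infty)\to[0,\infty)$; agent $i$'s utility for producing quality $x$ is $u_i(x)=f(x)-xC/q_i$. A tuple $(f,x_1^*,\dots,x_n^* )$ is feasible for the reward-design problem if for each $i$: $0\le x_i^*\le q_i$ and $u_i(x_i^* )\ge u_i(x)$ for all $x\in[0,q_i]$, and $\sum_{i=1}^n f(x_i^* )\le B$. The reward-design problem is to maximize $\sum_{i=1}^n x_i^*$ over feasible tuples. *)

theory Defs
  imports Complex_Main
begin

text \<open>Agents are indexed by 1..n; types q i, qualities x i, reward function f.
  A reward function maps [0,\<infinity>) to [0,\<infinity>); we model it as a real function that is
  nonnegative on [0,\<infinity>) (its values on negative reals are irrelevant).\<close>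

definition utility :: "(real \<Rightarrow> real) \<Rightarrow> real \<Rightarrow> real \<Rightarrow> real \<Rightarrow> real" where
  "utility f C qi y = f y - y * C / qi"

definition rd_feasible ::
  "nat \<Rightarrow> (nat \<Rightarrow> real) \<Rightarrow> real \<Rightarrow> real \<Rightarrow> (real \<Rightarrow> real) \<Rightarrow> (nat \<Rightarrow> real) \<Rightarrow> bool" where
  "rd_feasible n q C B f x \<longleftrightarrow>
     (\<forall>y\<ge>0. f y \<ge> 0) \<and>
     (\<forall>i\<in>{1..n}. 0 \<le> x i \<and> x i \<le> q i \<and>
        (\<forall>y\<in>{0..q i}. utility f C (q i) y \<le> utility f C (q i) (x i))) \<and>
     (\<Sum>i=1..n. f (x i)) \<le> B"

definition lp_feasible ::
  "nat \<Rightarrow> (nat \<Rightarrow> real) \<Rightarrow> real \<Rightarrow> real \<Rightarrow> (nat \<Rightarrow> real) \<Rightarrow> bool" where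
  "lp_feasible n q C B x \<longleftrightarrow>
     (\<forall>i\<in>{1..n}. 0 \<le> x i \<and> x i \<le> q i) \<and>
     (\<forall>i\<in>{1..<n}. x i \<le> x (i + 1)) \<and>
     C * (x n / q n +
          (\<Sum>i=1..n-1. ((real (n - i)) * (1 / q i - 1 / q (i + 1)) + 1 / q i) * x i)) \<le> B"

definition rd_values :: "nat \<Rightarrow> (nat \<Rightarrow> real) \<Rightarrow> real \<Rightarrow> real \<Rightarrow> real set" where
  "rd_values n q C B = {(\<Sum>i=1..n. x i) | f x. rd_feasible n q C B f x}"

definition lp_values :: "nat \<Rightarrow> (nat \<Rightarrow> real) \<Rightarrow> real \<Rightarrow> real \<Rightarrow> real set" where
  "lp_values n q C B = {(\<Sum>i=1..n. x i) | x. lp_feasible n q C B x}"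

text \<open>The reward function built from an LP solution x: f y = 0 for y < x 1, and for
  x j \<le> y < x (j+1) (with x (n+1) = \<infinity>) the given value; the relevant j is the
  largest index with x j \<le> y.\<close>

definition reward_f :: "nat \<Rightarrow> (nat \<Rightarrow> real) \<Rightarrow> real \<Rightarrow> (nat \<Rightarrow> real) \<Rightarrow> real \<Rightarrow> real" where
  "reward_f n q C x y =
     (if y < x 1 then 0
      else (let j = Max {j \<in> {1..n}. x j \<le> y} in
            C * ((\<Sum>t=1..j-1. x t / q t - x t / q (t + 1)) + x j / q j)))"

end

theory Submission imports Defs "HOL-Library.FuncSet" begin

lemma mono_gen:
  fixes a :: "nat \<Rightarrow> real"
  assumes step: "\<And>k. k \<in> {1..<n} \<Longrightarrow> a k \<le> a (k+1)" and "1 \<le> i" "i \<le> j" "j \<le> n"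
  shows "a i \<le> a j"
  using assms(3,4)
proof (induction j rule: dec_induct)
  case base then show ?case by simp
next
  case (step m)
  then have "a m \<le> a (m+1)" using assms(2) by (intro assms(1)) auto
  with step show ?case by simp
qed

lemma double_sum:
  fixes a :: "nat \<Rightarrow> real"
  shows "(\<Sum>k=1..n. \<Sum>t=1..<k. a t) = (\<Sum>i=1..<n. real (n - i) * a i)"
proof (induction n)
  case 0 then show ?case by simp
next
  case (Suc n)
  have "(\<Sum>k=1..Suc n. \<Sum>t=1..<k. a t) = (\<Sum>k=1..n. \<Sum>t=1..<k. a t) + (\<Sum>t=1..<Suc n. a t)"
    by simp
  also have "\<dots> = (\<Sum>i=1..<n. real (n - i) * a i) + (\<Sum>t=1..<Suc n. a t)" using Suc by simp
  also have "(\<Sum>t=1..<Suc n. a t) = (\<Sum>t=1..<n. a t) + (if n \<ge> 1 then a n else 0)"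
    by (cases n) auto
  also have "(\<Sum>i=1..<Suc n. real (Suc n - i) * a i) = (\<Sum>i=1..<n. real (Suc n - i) * a i) + (if n \<ge> 1 then a n else 0)"
    by (cases n) auto
  moreover have "(\<Sum>i=1..<n. real (Suc n - i) * a i) = (\<Sum>i=1..<n. real (n - i) * a i) + (\<Sum>t=1..<n. a t)"
    by (simp add: sum.distrib[symmetric] Suc_diff_le algebra_simps)
  ultimately show ?case by simp
qed

lemma term_id: "(r * (1/a - 1/b) + 1/a) * x = r * (x/a - x/(b::real)) + x/a"
  by (simp add: divide_inverse algebra_simps)

lemma lp_identity:
  fixes x q :: "nat \<Rightarrow> real"
  assumes "n \<ge> 1"
  shows "x n / q n + (\<Sum>i=1..n-1. ((real (n - i)) * (1 / q i - 1 / q (i + 1)) + 1 / q i) * x i)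
       = (\<Sum>k=1..n. (\<Sum>t=1..k-1. x t / q t - x t / q (t + 1)) + x k / q k)"
proof -
  have e1: "{1..n-1} = {1..<n}" using assms by auto
  have e2: "\<And>k::nat. {1..k-1} = {1..<k}" by (case_tac k) auto
  have "(\<Sum>i=1..<n. ((real (n - i)) * (1 / q i - 1 / q (i + 1)) + 1 / q i) * x i)
     = (\<Sum>i=1..<n. real (n - i) * (x i / q i - x i / q (i + 1))) + (\<Sum>i=1..<n. x i / q i)"
    unfolding sum.distrib[symmetric] by (intro sum.cong refl term_id)
  moreover have "(\<Sum>k=1..n. x k / q k) = (\<Sum>i=1..<n. x i / q i) + x n / q n"
  proof -
    obtain m where m: "n = Suc m" using assms by (cases n) auto
    show ?thesis unfolding m by (simp add: atLeastLessThanSuc_atLeastAtMost)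
  qed
  ultimately show ?thesis
    unfolding e1 e2 sum.distrib double_sum by simp
qed

lemma sum_swap:
  fixes h :: "nat \<Rightarrow> real \<Rightarrow> real"
  assumes "i \<in> A" "j \<in> A" "i \<noteq> j" "finite A"
  shows "(\<Sum>k\<in>A. h k ((z(i := z j, j := z i)) k)) = (\<Sum>k\<in>A. h k (z k)) + (h i (z j) - h i (z i)) + (h j (z i) - h j (z j))"
proof -
  have "(\<Sum>k\<in>A. h k ((z(i := z j, j := z i)) k)) = (\<Sum>k\<in>A. h k (z k) + (if k = i then h i (z j) - h i (z i) else 0) + (if k = j then h j (z i) - h j (z j) else 0))"
    using assms(3) by (intro sum.cong) auto
  also have "\<dots> = (\<Sum>k\<in>A. h k (z k)) + (h i (z j) - h i (z i)) + (h j (z i) - h j (z j))"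
    using assms by (simp add: sum.distrib)
  finally show ?thesis .
qed

lemma constr:
  fixes n :: nat and q x :: "nat \<Rightarrow> real" and C B :: real
  assumes n: "n \<ge> 1"
    and qpos: "\<And>i. i \<in> {1..n} \<Longrightarrow> 0 < q i"
    and qmono: "\<And>i. i \<in> {1..<n} \<Longrightarrow> q i \<le> q (i + 1)"
    and C: "C > 0"
    and lp: "lp_feasible n q C B x"
  shows "rd_feasible n q C B (reward_f n q C x) x"
proof -
  define F where "F k = (\<Sum>t=1..k-1. x t / q t - x t / q (t + 1)) + x k / q k" for k
  define f where "f = reward_f n q C x"
  have xb: "\<And>i. i \<in> {1..n} \<Longrightarrow> 0 \<le> x i \<and> x i \<le> q i" and xm: "\<And>i. i \<in> {1..<n} \<Longrightarrow> x i \<le> x (i + 1)"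
    and bud: "C * (x n / q n + (\<Sum>i=1..n-1. ((real (n - i)) * (1 / q i - 1 / q (i + 1)) + 1 / q i) * x i)) \<le> B"
    using lp unfolding lp_feasible_def by auto
  have xmono: "\<And>i j. 1 \<le> i \<Longrightarrow> i \<le> j \<Longrightarrow> j \<le> n \<Longrightarrow> x i \<le> x j"
    using mono_gen[of n x] xm by blast
  have qm: "\<And>i j. 1 \<le> i \<Longrightarrow> i \<le> j \<Longrightarrow> j \<le> n \<Longrightarrow> q i \<le> q j"
    using mono_gen[of n q] qmono by blast
  have Frec: "F (k+1) = F k + (x (k+1) - x k) / q (k+1)" if "k \<ge> 1" for k
  proof -
    have "(\<Sum>t=1..(k+1)-1. x t / q t - x t / q (t + 1)) = (\<Sum>t=1..k-1. x t / q t - x t / q (t + 1)) + (x k / q k - x k / q (k + 1))"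
      using that by (cases k) (auto simp: sum.atLeast_Suc_atMost_Suc_shift)
    then show ?thesis unfolding F_def by (simp add: diff_divide_distrib)
  qed
  have F1: "F 1 = x 1 / q 1" unfolding F_def by simp
  have Fmono: "\<And>i j. 1 \<le> i \<Longrightarrow> i \<le> j \<Longrightarrow> j \<le> n \<Longrightarrow> F i \<le> F j"
  proof -
    have "F k \<le> F (k+1)" if "k \<in> {1..<n}" for k
    proof -
      have "x k \<le> x (k+1)" using xm that by auto
      moreover have "q (k+1) > 0" using qpos that by auto
      ultimately show ?thesis using Frec[of k] that by auto
    qed
    then show "\<And>i j. 1 \<le> i \<Longrightarrow> i \<le> j \<Longrightarrow> j \<le> n \<Longrightarrow> F i \<le> F j"
      using mono_gen[of n F] by blast
  qed
  have Fnn: "F k \<ge> 0" if "k \<in> {1..n}" for k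
  proof -
    have "F 1 \<ge> 0" using F1 xb[of 1] qpos[of 1] n by auto
    then show ?thesis using Fmono[of 1 k] that by auto
  qed
  have U: "F j - x j / q i \<le> F i - x i / q i" if i: "i \<in> {1..n}" and j: "j \<in> {1..n}" for i j
  proof (cases "i \<le> j")
    case True
    have "F m - x m / q i \<le> F i - x i / q i" if "i \<le> m" "m \<le> n" for m
      using that
    proof (induction m rule: dec_induct)
      case base then show ?case by simp
    next
      case (step m)
      have m1: "m \<ge> 1" using step i by auto
      have "q i \<le> q (m+1)" using qm[of i "m+1"] i step by auto
      moreover have "q i > 0" using qpos i by auto
      moreover have "x m \<le> x (m+1)" using xm[of m] step m1 by auto
      ultimately have "(x (m+1) - x m) / q (m+1) \<le> (x (m+1) - x m) / q i"
        by (intro divide_left_mono) auto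
      then have "F (m+1) - x (m+1) / q i \<le> F m - x m / q i"
        using Frec[OF m1] by (simp add: diff_divide_distrib)
      then show ?case using step by simp
    qed
    then show ?thesis using True j by auto
  next
    case False
    have "F m - x m / q i \<le> F i - x i / q i" if "m \<le> i" "m \<ge> 1" for m
      using that
    proof (induction m rule: inc_induct)
      case base then show ?case by simp
    next
      case (step m)
      have "q (m+1) \<le> q i" using qm[of "m+1" i] i step by auto
      moreover have "q (m+1) > 0" using qpos i step by auto
      moreover have "x m \<le> x (m+1)" using xm[of m] step i by auto
      ultimately have "(x (m+1) - x m) / q i \<le> (x (m+1) - x m) / q (m+1)"
        by (intro divide_left_mono) auto
      then have "F m - x m / q i \<le> F (m+1) - x (m+1) / q i"
        using Frec[OF step(4)] by (simp add: diff_divide_distrib)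
      then show ?case using step by simp
    qed
    then show ?thesis using False j by auto
  qed
  have fval: "\<exists>m\<in>{1..n}. x m \<le> y \<and> (\<forall>i\<in>{1..n}. x i \<le> y \<longrightarrow> i \<le> m) \<and> f y = C * F m" if "x 1 \<le> y" for y
  proof -
    let ?S = "{j \<in> {1..n}. x j \<le> y}"
    have fin: "finite ?S" by simp
    have ne: "1 \<in> ?S" using that n by auto
    define m where "m = Max ?S"
    have "m \<in> ?S" unfolding m_def using fin ne by (intro Max_in) auto
    moreover have "\<forall>i\<in>{1..n}. x i \<le> y \<longrightarrow> i \<le> m" unfolding m_def using fin by auto
    moreover have "f y = C * F m" unfolding f_def reward_f_def F_def m_def using that by (simp add: Let_def)
    ultimately show ?thesis by auto
  qed
  have fx: "f (x i) = C * F i" if i: "i \<in> {1..n}" for i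
  proof -
    have "x 1 \<le> x i" using xmono[of 1 i] i by auto
    then obtain m where m: "m \<in> {1..n}" "x m \<le> x i" "\<forall>k\<in>{1..n}. x k \<le> x i \<longrightarrow> k \<le> m" "f (x i) = C * F m"
      using fval by blast
    have im: "i \<le> m" using m(3) i by auto
    then have "x i \<le> x m" using xmono[of i m] i m by auto
    then have xe: "x m = x i" using m by auto
    have "F m \<le> F i" using U[OF i m(1)] xe by simp
    moreover have "F i \<le> F m" using Fmono[of i m] im i m by auto
    ultimately show ?thesis using m by auto
  qed
  have nonneg: "\<forall>y\<ge>0. f y \<ge> 0"
  proof (intro allI impI)
    fix y :: real assume "y \<ge> 0"
    show "f y \<ge> 0"
    proof (cases "y < x 1")
      case True then show ?thesis unfolding f_def reward_f_def by simp
    next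
      case False
      then obtain m where "m \<in> {1..n}" "f y = C * F m" using fval[of y] False unfolding not_less by blast
      then show ?thesis using Fnn C by auto
    qed
  qed
  have ic: "utility f C (q i) y \<le> utility f C (q i) (x i)" if i: "i \<in> {1..n}" and y: "y \<in> {0..q i}" for i y
  proof -
    have qi: "q i > 0" using qpos i by auto
    have main: "f y \<le> C * (F i - x i / q i) + C * (y / q i)"
    proof (cases "y < x 1")
      case True
      then have "f y = 0" unfolding f_def reward_f_def by simp
      moreover have "F 1 - x 1 / q 1 \<le> F 1 - x 1 / q i"
      proof -
        have "q 1 \<le> q i" using qm[of 1 i] i by auto
        moreover have "q 1 > 0" using qpos n by auto
        moreover have "x 1 \<ge> 0" using xb n by auto
        ultimately have "x 1 / q i \<le> x 1 / q 1" by (intro divide_left_mono) auto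
        then show ?thesis by simp
      qed
      moreover have "F 1 - x 1 / q i \<le> F i - x i / q i" using U[OF i, of 1] n by auto
      moreover have "y / q i \<ge> 0" using y qi by auto
      ultimately have "0 \<le> (F i - x i / q i) + y / q i" using F1 by auto
      then have "0 \<le> C * ((F i - x i / q i) + y / q i)" using C by auto
      then show ?thesis using \<open>f y = 0\<close> by (simp add: algebra_simps)
    next
      case False
      then obtain m where m: "m \<in> {1..n}" "x m \<le> y" "f y = C * F m" using fval[of y] False unfolding not_less by blast
      have "F m - y / q i \<le> F m - x m / q i" using m(2) qi by (simp add: divide_right_mono)
      also have "\<dots> \<le> F i - x i / q i" using U[OF i m(1)] .
      finally have "F m \<le> (F i - x i / q i) + y / q i" by simp
      then have "C * F m \<le> C * ((F i - x i / q i) + y / q i)" using C by (intro mult_left_mono) auto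
      then show ?thesis using m(3) by (simp add: algebra_simps)
    qed
    show ?thesis unfolding utility_def using main fx[OF i] by (simp add: algebra_simps)
  qed
  have "(\<Sum>i=1..n. f (x i)) = (\<Sum>i=1..n. C * F i)" using fx by (intro sum.cong) auto
  also have "\<dots> = C * (\<Sum>i=1..n. F i)" by (simp add: sum_distrib_left)
  also have "\<dots> \<le> B" using bud lp_identity[OF n, of x q] unfolding F_def by simp
  finally have "(\<Sum>i=1..n. f (x i)) \<le> B" .
  then show ?thesis unfolding rd_feasible_def f_def[symmetric] using nonneg xb ic by auto
qed


lemma rd_to_lp:
  fixes n :: nat and q y :: "nat \<Rightarrow> real" and C B :: real and g :: "real \<Rightarrow> real"
  assumes n: "n \<ge> 1"
    and qpos: "\<And>i. i \<in> {1..n} \<Longrightarrow> 0 < q i"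
    and qmono: "\<And>i. i \<in> {1..<n} \<Longrightarrow> q i \<le> q (i + 1)"
    and C: "C > 0"
    and rd: "rd_feasible n q C B g y"
  shows "\<exists>z. lp_feasible n q C B z \<and> (\<Sum>i=1..n. z i) = (\<Sum>i=1..n. y i)"
proof -
  define IC where "IC i v \<longleftrightarrow> 0 \<le> v \<and> v \<le> q i \<and> (\<forall>w\<in>{0..q i}. utility g C (q i) w \<le> utility g C (q i) v)" for i v
  define V where "V = y ` {1..n}"
  define S where "S = {z \<in> Pi\<^sub>E {1..n} (\<lambda>_. V). (\<forall>i\<in>{1..n}. IC i (z i)) \<and> (\<Sum>i=1..n. z i) = (\<Sum>i=1..n. y i) \<and> (\<Sum>i=1..n. g (z i)) = (\<Sum>i=1..n. g (y i))}"
  define \<Phi> where "\<Phi> z = (\<Sum>i=1..n. real i * z i)" for z :: "nat \<Rightarrow> real"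
  have g0: "g 0 \<ge> 0" and yic: "\<And>i. i \<in> {1..n} \<Longrightarrow> IC i (y i)" and gB: "(\<Sum>i=1..n. g (y i)) \<le> B"
    using rd unfolding rd_feasible_def IC_def by auto
  have qm: "\<And>i j. 1 \<le> i \<Longrightarrow> i \<le> j \<Longrightarrow> j \<le> n \<Longrightarrow> q i \<le> q j"
    using mono_gen[of n q] qmono by blast
  have finS: "finite S"
  proof -
    have "S \<subseteq> Pi\<^sub>E {1..n} (\<lambda>_. V)" unfolding S_def by auto
    moreover have "finite (Pi\<^sub>E {1..n} (\<lambda>_. V))" unfolding V_def by (intro finite_PiE) auto
    ultimately show ?thesis by (rule finite_subset)
  qed
  have yS: "restrict y {1..n} \<in> S"
    unfolding S_def V_def using yic by (auto simp: PiE_iff intro!: sum.cong)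
  define M where "M = Max (\<Phi> ` S)"
  have "M \<in> \<Phi> ` S" unfolding M_def using finS yS by (intro Max_in) auto
  then obtain z where zS: "z \<in> S" and zM: "\<Phi> z = M" by auto
  have zmax: "\<Phi> w \<le> \<Phi> z" if "w \<in> S" for w
    unfolding zM M_def using finS that by (intro Max_ge) auto
  have zic: "\<And>i. i \<in> {1..n} \<Longrightarrow> IC i (z i)" and zsum: "(\<Sum>i=1..n. z i) = (\<Sum>i=1..n. y i)"
    and zg: "(\<Sum>i=1..n. g (z i)) = (\<Sum>i=1..n. g (y i))" and zPi: "z \<in> Pi\<^sub>E {1..n} (\<lambda>_. V)"
    using zS unfolding S_def by auto
  have zmono: "z i \<le> z (i+1)" if i: "i \<in> {1..<n}" for i
  proof (rule ccontr)
    assume "\<not> z i \<le> z (i+1)"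
    then have lt: "z (i+1) < z i" by simp
    have i1: "i \<in> {1..n}" "i+1 \<in> {1..n}" using i by auto
    have qeq: "q i = q (i+1)"
    proof (rule ccontr)
      assume "q i \<noteq> q (i+1)"
      then have qlt: "q i < q (i+1)" using qmono[OF i] by simp
      have qi: "q i > 0" using qpos i1 by auto
      have a: "IC i (z i)" and b: "IC (i+1) (z (i+1))" using zic i1 by auto
      have "utility g C (q i) (z (i+1)) \<le> utility g C (q i) (z i)"
        using a b lt unfolding IC_def by auto
      moreover have "utility g C (q (i+1)) (z i) \<le> utility g C (q (i+1)) (z (i+1))"
        using a b qlt unfolding IC_def by auto
      ultimately have "(z i - z (i+1)) * C / q i \<le> (z i - z (i+1)) * C / q (i+1)"
        unfolding utility_def by (simp add: diff_divide_distrib left_diff_distrib)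
      moreover have "(z i - z (i+1)) * C / q (i+1) < (z i - z (i+1)) * C / q i"
        using lt C qi qlt by (intro divide_strict_left_mono) auto
      ultimately show False by simp
    qed
    define z' where "z' = z(i := z (i+1), i+1 := z i)"
    have sw: "(\<Sum>k=1..n. h k (z' k)) = (\<Sum>k=1..n. h k (z k)) + (h i (z (i+1)) - h i (z i)) + (h (i+1) (z i) - h (i+1) (z (i+1)))" for h :: "nat \<Rightarrow> real \<Rightarrow> real"
      unfolding z'_def by (rule sum_swap) (use i1 in auto)
    have "z' \<in> S"
    proof -
      have "z' \<in> Pi\<^sub>E {1..n} (\<lambda>_. V)" using zPi i1 unfolding z'_def by (auto simp: PiE_iff extensional_def)
      moreover have "\<forall>k\<in>{1..n}. IC k (z' k)"
      proof
        fix k assume k: "k \<in> {1..n}"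
        show "IC k (z' k)"
        proof (cases "k = i \<or> k = i+1")
          case True
          then show ?thesis using zic[OF i1(1)] zic[OF i1(2)] qeq unfolding z'_def IC_def by auto
        next
          case False then show ?thesis using zic[OF k] unfolding z'_def by auto
        qed
      qed
      moreover have "(\<Sum>k=1..n. z' k) = (\<Sum>i=1..n. y i)" using sw[of "\<lambda>k v. v"] zsum by simp
      moreover have "(\<Sum>k=1..n. g (z' k)) = (\<Sum>i=1..n. g (y i))" using sw[of "\<lambda>k v. g v"] zg by simp
      ultimately show ?thesis unfolding S_def by auto
    qed
    moreover have "\<Phi> z' > \<Phi> z"
    proof -
      have "\<Phi> z' = \<Phi> z + (real i * z (i+1) - real i * z i) + (real (i+1) * z i - real (i+1) * z (i+1))"
        unfolding \<Phi>_def using sw[of "\<lambda>k v. real k * v"] by simp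
      also have "\<dots> = \<Phi> z + (z i - z (i+1))" by (simp add: algebra_simps)
      finally show ?thesis using lt by simp
    qed
    ultimately show False using zmax by force
  qed
  define F where "F k = (\<Sum>t=1..k-1. z t / q t - z t / q (t + 1)) + z k / q k" for k
  have Frec: "F (k+1) = F k + (z (k+1) - z k) / q (k+1)" if "k \<ge> 1" for k
  proof -
    have "(\<Sum>t=1..(k+1)-1. z t / q t - z t / q (t + 1)) = (\<Sum>t=1..k-1. z t / q t - z t / q (t + 1)) + (z k / q k - z k / q (k + 1))"
      using that by (cases k) (auto simp: sum.atLeast_Suc_atMost_Suc_shift)
    then show ?thesis unfolding F_def by (simp add: diff_divide_distrib)
  qed
  have gF: "C * F k \<le> g (z k)" if "1 \<le> k" "k \<le> n" for k
    using that
  proof (induction k rule: dec_induct)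
    case base
    have "IC 1 (z 1)" using zic n by auto
    moreover have "q 1 > 0" using qpos n by auto
    ultimately have "utility g C (q 1) 0 \<le> utility g C (q 1) (z 1)" unfolding IC_def by auto
    then have "z 1 * C / q 1 \<le> g (z 1)" using g0 unfolding utility_def by simp
    then show ?case unfolding F_def by (simp add: mult.commute)
  next
    case (step k)
    have k1: "k \<in> {1..n}" "k+1 \<in> {1..n}" using step by auto
    have "IC (k+1) (z (k+1))" "IC k (z k)" using zic k1 by auto
    moreover have "q k \<le> q (k+1)" using qmono[of k] step by auto
    ultimately have "utility g C (q (k+1)) (z k) \<le> utility g C (q (k+1)) (z (k+1))"
      unfolding IC_def by auto
    then have "g (z k) + (z (k+1) - z k) * C / q (k+1) \<le> g (z (k+1))"
      unfolding utility_def by (simp add: diff_divide_distrib left_diff_distrib)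
    moreover have "C * F (k+1) = C * F k + (z (k+1) - z k) * C / q (k+1)"
      using Frec[OF step(1)] by (simp add: algebra_simps)
    ultimately show ?case using step by simp
  qed
  have "C * (z n / q n + (\<Sum>i=1..n-1. ((real (n - i)) * (1 / q i - 1 / q (i + 1)) + 1 / q i) * z i))
      = (\<Sum>k=1..n. C * F k)" using lp_identity[OF n, of z q] unfolding F_def by (simp add: sum_distrib_left)
  also have "\<dots> \<le> (\<Sum>k=1..n. g (z k))" using gF by (intro sum_mono) auto
  also have "\<dots> \<le> B" using zg gB by simp
  finally have "lp_feasible n q C B z" unfolding lp_feasible_def using zic zmono unfolding IC_def by auto
  then show ?thesis using zsum by auto
qed


theorem theorem2:
  fixes n :: nat and q :: "nat \<Rightarrow> real" and C B :: real
  assumes n: "n \<ge> 1"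
    and qpos: "\<And>i. i \<in> {1..n} \<Longrightarrow> 0 < q i"
    and qmono: "\<And>i. i \<in> {1..<n} \<Longrightarrow> q i \<le> q (i + 1)"
    and C: "C > 0" and B: "B > 0"
  shows "Sup (rd_values n q C B) = Sup (lp_values n q C B) \<and>
         (\<forall>x. lp_feasible n q C B x \<longrightarrow>
             (\<forall>y. lp_feasible n q C B y \<longrightarrow> (\<Sum>i=1..n. y i) \<le> (\<Sum>i=1..n. x i)) \<longrightarrow>
             rd_feasible n q C B (reward_f n q C x) x \<and>
             (\<forall>g y. rd_feasible n q C B g y \<longrightarrow> (\<Sum>i=1..n. y i) \<le> (\<Sum>i=1..n. x i)))"
proof -
  have lp0: "lp_feasible n q C B (\<lambda>_. 0)"
    unfolding lp_feasible_def using qpos B by (auto simp: less_imp_le)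
  have lpne: "lp_values n q C B \<noteq> {}" using lp0 unfolding lp_values_def by blast
  have rdne: "rd_values n q C B \<noteq> {}"
    using constr[of n q, OF n qpos qmono C lp0] unfolding rd_values_def by blast
  have bddlp: "bdd_above (lp_values n q C B)"
  proof (rule bdd_aboveI)
    fix v assume "v \<in> lp_values n q C B"
    then obtain x where "lp_feasible n q C B x" "v = (\<Sum>i=1..n. x i)" unfolding lp_values_def by blast
    then show "v \<le> (\<Sum>i=1..n. q i)" unfolding lp_feasible_def by (auto intro: sum_mono)
  qed
  have bddrd: "bdd_above (rd_values n q C B)"
  proof (rule bdd_aboveI)
    fix v assume "v \<in> rd_values n q C B"
    then obtain g x where "rd_feasible n q C B g x" "v = (\<Sum>i=1..n. x i)" unfolding rd_values_def by blast
    then show "v \<le> (\<Sum>i=1..n. q i)" unfolding rd_feasible_def by (auto intro: sum_mono)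
  qed
  have le1: "Sup (rd_values n q C B) \<le> Sup (lp_values n q C B)"
  proof (rule cSup_least[OF rdne])
    fix v assume "v \<in> rd_values n q C B"
    then obtain g y where "rd_feasible n q C B g y" "v = (\<Sum>i=1..n. y i)" unfolding rd_values_def by blast
    then obtain z where "lp_feasible n q C B z" "v = (\<Sum>i=1..n. z i)"
      using rd_to_lp[of n q, OF n qpos qmono C] by metis
    then have "v \<in> lp_values n q C B" unfolding lp_values_def by blast
    then show "v \<le> Sup (lp_values n q C B)" using bddlp by (rule cSup_upper)
  qed
  have le2: "Sup (lp_values n q C B) \<le> Sup (rd_values n q C B)"
  proof (rule cSup_least[OF lpne])
    fix v assume "v \<in> lp_values n q C B"
    then obtain x where "lp_feasible n q C B x" "v = (\<Sum>i=1..n. x i)" unfolding lp_values_def by blast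
    then have "v \<in> rd_values n q C B"
      using constr[of n q, OF n qpos qmono C] unfolding rd_values_def by blast
    then show "v \<le> Sup (rd_values n q C B)" using bddrd by (rule cSup_upper)
  qed
  have part2: "rd_feasible n q C B (reward_f n q C x) x \<and>
             (\<forall>g y. rd_feasible n q C B g y \<longrightarrow> (\<Sum>i=1..n. y i) \<le> (\<Sum>i=1..n. x i))"
    if x: "lp_feasible n q C B x" and opt: "\<forall>y. lp_feasible n q C B y \<longrightarrow> (\<Sum>i=1..n. y i) \<le> (\<Sum>i=1..n. x i)" for x
  proof
    show "rd_feasible n q C B (reward_f n q C x) x" using constr[of n q, OF n qpos qmono C x] .
    show "\<forall>g y. rd_feasible n q C B g y \<longrightarrow> (\<Sum>i=1..n. y i) \<le> (\<Sum>i=1..n. x i)"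
    proof (intro allI impI)
      fix g y assume "rd_feasible n q C B g y"
      then obtain z where "lp_feasible n q C B z" "(\<Sum>i=1..n. z i) = (\<Sum>i=1..n. y i)"
        using rd_to_lp[of n q, OF n qpos qmono C] by metis
      then show "(\<Sum>i=1..n. y i) \<le> (\<Sum>i=1..n. x i)" using opt by metis
    qed
  qed
  have eq: "Sup (rd_values n q C B) = Sup (lp_values n q C B)" using le1 le2 by (rule antisym)
  show ?thesis using eq part2 by blast
qed

end
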